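(* Let $(M,\circ,\mathrm{OR})$ be a free $\mathbb{D}$-module of rank 3 with scalar product and orientation, and let $z_1,z_2,z_3\in M\setminus\epsilon M$ be sliding vectors (zero pitch) with parallel axes. Then $z_1,z_2,z_3$ are $\mathbb{R}$-linearly dependent if and only if their axes are coplanar.
   Context: $\mathbb{D}=\{a+\epsilon b: a,b\in\mathbb{R}\}$, $\epsilon^2=0$. Scalar product: symmetric $\mathbb{D}$-bilinear $\circ:M\times M\to\mathbb{D}$ with $\mathfrak{Re}(x\circ x)\ge0$, equality iff $x\in\epsilon M$; orientation: one of the two classes of ordered bases under $\{b'_j=A_{jk}b_k\}\sim\{b_k\}$ iff $\det\mathfrak{Re}(A)>0$. $V=M/\epsilon M$, $\pi$ the quotient map. $E$ is the set of real 3-dimensional subspaces $P\subset M$ with $\mathfrak{Du}(x\circ y)=0$ for $x,y\in P$ and $P\cap\epsilon M=\{0\}$, a Euclidean affine space over $V$ (with $B-A:=d^ke_k$ where $e^B_i=e^A_i+\epsilon\,\epsilon_{ijk}d^ke^A_j$, $\{e_i\}$ positive orthonormal in $V$, $e^P_i\in P$ its lift). Each $z\in M\setminus\epsilon M$ is uniquely $z=(a+\epsilon b)u$ with $a>0$, $b\in\mathbb{R}$, $u\circ u=1$; its pitch is $b/a$ (a sliding vector is one with pitch $0$) and its axis is the line $\{P\in E: u\in P\}$, with direction $\pi(u)$. *)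

theory Defs
  imports "HOL-Analysis.Analysis"
begin

datatype dual = Dual (dre: real) (ddu: real)

instantiation dual :: comm_ring_1
begin
definition zero_dual_def: "0 = Dual 0 0"
definition one_dual_def: "1 = Dual 1 0"
definition plus_dual_def: "x + y = Dual (dre x + dre y) (ddu x + ddu y)"
definition minus_dual_def: "x - y = Dual (dre x - dre y) (ddu x - ddu y)"
definition uminus_dual_def: "- x = Dual (- dre x) (- ddu x)"
definition times_dual_def: "x * y = Dual (dre x * dre y) (dre x * ddu y + ddu x * dre y)"
instance
  by standard (auto simp: zero_dual_def one_dual_def plus_dual_def minus_dual_def
      uminus_dual_def times_dual_def dual.expand algebra_simps)
end

definition deps :: dual where "deps = Dual 0 1"

definition rscale :: "(dual \<Rightarrow> 'm \<Rightarrow> 'm) \<Rightarrow> real \<Rightarrow> 'm \<Rightarrow> 'm" where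
  "rscale smul r x = smul (Dual r 0) x"

definition epsM :: "(dual \<Rightarrow> 'm \<Rightarrow> 'm) \<Rightarrow> 'm set" where
  "epsM smul = range (smul deps)"

definition is_dbasis :: "(dual \<Rightarrow> 'm::ab_group_add \<Rightarrow> 'm) \<Rightarrow> 'm^3 \<Rightarrow> bool" where
  "is_dbasis smul b \<longleftrightarrow> (\<forall>x. \<exists>!c::dual^3. x = (\<Sum>i\<in>UNIV. smul (c$i) (b$i)))"

definition free_rank3 :: "(dual \<Rightarrow> 'm::ab_group_add \<Rightarrow> 'm) \<Rightarrow> bool" where
  "free_rank3 smul \<longleftrightarrow> (\<exists>b. is_dbasis smul b)"

definition is_scalar_product ::
  "(dual \<Rightarrow> 'm::ab_group_add \<Rightarrow> 'm) \<Rightarrow> ('m \<Rightarrow> 'm \<Rightarrow> dual) \<Rightarrow> bool" where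
  "is_scalar_product smul sp \<longleftrightarrow>
     (\<forall>x y. sp x y = sp y x) \<and>
     (\<forall>x y w. sp (x + y) w = sp x w + sp y w) \<and>
     (\<forall>a x w. sp (smul a x) w = a * sp x w) \<and>
     (\<forall>x. dre (sp x x) \<ge> 0) \<and>
     (\<forall>x. dre (sp x x) = 0 \<longleftrightarrow> x \<in> epsM smul)"

definition same_orientation ::
  "(dual \<Rightarrow> 'm::ab_group_add \<Rightarrow> 'm) \<Rightarrow> 'm^3 \<Rightarrow> 'm^3 \<Rightarrow> bool" where
  "same_orientation smul b b' \<longleftrightarrow>
     (\<exists>A::dual^3^3. (\<forall>j. b'$j = (\<Sum>k\<in>UNIV. smul (A$j$k) (b$k))) \<and>
        det (\<chi> j k. dre (A$j$k)) > 0)"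

definition is_orientation ::
  "(dual \<Rightarrow> 'm::ab_group_add \<Rightarrow> 'm) \<Rightarrow> ('m^3) set \<Rightarrow> bool" where
  "is_orientation smul OR \<longleftrightarrow>
     (\<exists>b. is_dbasis smul b \<and> OR = {b'. is_dbasis smul b' \<and> same_orientation smul b b'})"

definition dmod_sp_or ::
  "(dual \<Rightarrow> 'm::ab_group_add \<Rightarrow> 'm) \<Rightarrow> ('m \<Rightarrow> 'm \<Rightarrow> dual) \<Rightarrow> ('m^3) set \<Rightarrow> bool" where
  "dmod_sp_or smul sp OR \<longleftrightarrow>
     module smul \<and> free_rank3 smul \<and> is_scalar_product smul sp \<and> is_orientation smul OR"

definition real_dim3_subspace :: "(dual \<Rightarrow> 'm::ab_group_add \<Rightarrow> 'm) \<Rightarrow> 'm set \<Rightarrow> bool" where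
  "real_dim3_subspace smul P \<longleftrightarrow>
     module.subspace (rscale smul) P \<and>
     (\<exists>B. finite B \<and> card B = 3 \<and> \<not> module.dependent (rscale smul) B \<and>
          module.span (rscale smul) B = P)"

definition Espace ::
  "(dual \<Rightarrow> 'm::ab_group_add \<Rightarrow> 'm) \<Rightarrow> ('m \<Rightarrow> 'm \<Rightarrow> dual) \<Rightarrow> 'm set set" where
  "Espace smul sp = {P. real_dim3_subspace smul P \<and>
      (\<forall>x\<in>P. \<forall>y\<in>P. ddu (sp x y) = 0) \<and> P \<inter> epsM smul = {0}}"

text \<open>The lift of (the class of) v in V = M / eps M to P: the unique element of P
  congruent to v modulo eps M.\<close>
definition lift_to :: "(dual \<Rightarrow> 'm::ab_group_add \<Rightarrow> 'm) \<Rightarrow> 'm set \<Rightarrow> 'm \<Rightarrow> 'm" where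
  "lift_to smul P v = (THE x. x \<in> P \<and> x - v \<in> epsM smul)"

text \<open>Positive orthonormal basis of V, given by representatives f_i in M of e_i = pi(f_i):
  orthonormal for the induced real scalar product on V, and positively oriented,
  i.e. (a, equivalently every) lift lies in OR.\<close>
definition pos_orthonormal_V ::
  "(dual \<Rightarrow> 'm::ab_group_add \<Rightarrow> 'm) \<Rightarrow> ('m \<Rightarrow> 'm \<Rightarrow> dual) \<Rightarrow> ('m^3) set \<Rightarrow> 'm^3 \<Rightarrow> bool" where
  "pos_orthonormal_V smul sp OR f \<longleftrightarrow>
     f \<in> OR \<and> (\<forall>i j. dre (sp (f$i) (f$j)) = (if i = j then 1 else 0))"

text \<open>Levi-Civita symbol on the index type 3 = {0,1,2} (arithmetic mod 3).\<close>
definition levi :: "3 \<Rightarrow> 3 \<Rightarrow> 3 \<Rightarrow> real" where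
  "levi i j k = (if i \<noteq> j \<and> j \<noteq> k \<and> i \<noteq> k then (if j = i + 1 then 1 else -1) else 0)"

text \<open>Coordinates d (w.r.t. the basis e) of B - A = d^k e_k, where
  e^B_i = e^A_i + eps eps_ijk d^k e^A_j.\<close>
definition Ediff ::
  "(dual \<Rightarrow> 'm::ab_group_add \<Rightarrow> 'm) \<Rightarrow> 'm^3 \<Rightarrow> 'm set \<Rightarrow> 'm set \<Rightarrow> real^3" where
  "Ediff smul f B A = (THE d::real^3. \<forall>i.
      lift_to smul B (f$i) = lift_to smul A (f$i) +
        (\<Sum>j\<in>UNIV. \<Sum>k\<in>UNIV. smul (Dual 0 (levi i j k * d$k)) (lift_to smul A (f$j))))"

definition coplanar_in_E ::
  "(dual \<Rightarrow> 'm::ab_group_add \<Rightarrow> 'm) \<Rightarrow> ('m \<Rightarrow> 'm \<Rightarrow> dual) \<Rightarrow> ('m^3) set \<Rightarrow> 'm set set set \<Rightarrow> bool" where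
  "coplanar_in_E smul sp OR Ls \<longleftrightarrow>
     (\<exists>f. pos_orthonormal_V smul sp OR f \<and>
       (\<exists>A\<in>Espace smul sp. \<exists>W::(real^3) set. subspace W \<and> dim W = 2 \<and>
          (\<forall>L\<in>Ls. \<forall>P\<in>L. Ediff smul f P A \<in> W)))"

definition polar_decomp ::
  "(dual \<Rightarrow> 'm::ab_group_add \<Rightarrow> 'm) \<Rightarrow> ('m \<Rightarrow> 'm \<Rightarrow> dual) \<Rightarrow> 'm \<Rightarrow> real \<Rightarrow> real \<Rightarrow> 'm \<Rightarrow> bool" where
  "polar_decomp smul sp z a b u \<longleftrightarrow> a > 0 \<and> z = smul (Dual a b) u \<and> sp u u = 1"

definition pitch :: "(dual \<Rightarrow> 'm::ab_group_add \<Rightarrow> 'm) \<Rightarrow> ('m \<Rightarrow> 'm \<Rightarrow> dual) \<Rightarrow> 'm \<Rightarrow> real" where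
  "pitch smul sp z = (THE p. \<exists>a b u. polar_decomp smul sp z a b u \<and> p = b / a)"

definition unit_part :: "(dual \<Rightarrow> 'm::ab_group_add \<Rightarrow> 'm) \<Rightarrow> ('m \<Rightarrow> 'm \<Rightarrow> dual) \<Rightarrow> 'm \<Rightarrow> 'm" where
  "unit_part smul sp z = (THE u. \<exists>a b. polar_decomp smul sp z a b u)"

definition sliding_vector :: "(dual \<Rightarrow> 'm::ab_group_add \<Rightarrow> 'm) \<Rightarrow> ('m \<Rightarrow> 'm \<Rightarrow> dual) \<Rightarrow> 'm \<Rightarrow> bool" where
  "sliding_vector smul sp z \<longleftrightarrow> z \<notin> epsM smul \<and> pitch smul sp z = 0"

definition axis :: "(dual \<Rightarrow> 'm::ab_group_add \<Rightarrow> 'm) \<Rightarrow> ('m \<Rightarrow> 'm \<Rightarrow> dual) \<Rightarrow> 'm \<Rightarrow> 'm set set" where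
  "axis smul sp z = {P \<in> Espace smul sp. unit_part smul sp z \<in> P}"

text \<open>Axes are parallel iff their directions pi(u) span the same line of V
  (the directions are nonzero).\<close>
definition parallel_axes :: "(dual \<Rightarrow> 'm::ab_group_add \<Rightarrow> 'm) \<Rightarrow> ('m \<Rightarrow> 'm \<Rightarrow> dual) \<Rightarrow> 'm \<Rightarrow> 'm \<Rightarrow> bool" where
  "parallel_axes smul sp z w \<longleftrightarrow>
     (\<exists>c::real. unit_part smul sp z - rscale smul c (unit_part smul sp w) \<in> epsM smul)"

end

theory Submission
  imports Defs
begin

lemma dual_simps[simp]:
  "dre (x + y) = dre x + dre y" "ddu (x + y) = ddu x + ddu y"
  "dre (x * y) = dre x * dre y" "ddu (x * y) = dre x * ddu y + ddu x * dre y"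
  "dre 0 = 0" "ddu 0 = 0" "dre 1 = 1" "ddu 1 = 0"
  "dre (- x) = - dre x" "ddu (- x) = - ddu x"
  "dre (x - y) = dre x - dre y" "ddu (x - y) = ddu x - ddu y"
  "dre deps = 0" "ddu deps = 1"
  by (simp_all add: plus_dual_def times_dual_def zero_dual_def one_dual_def uminus_dual_def
      minus_dual_def deps_def)

lemma dual_eq_iff: "x = y \<longleftrightarrow> dre x = dre y \<and> ddu x = ddu y"
  using dual.expand by blast

lemma dre_sum: "dre (sum f S) = (\<Sum>x\<in>S. dre (f x))"
  by (induct S rule: infinite_finite_induct) auto
lemma ddu_sum: "ddu (sum f S) = (\<Sum>x\<in>S. ddu (f x))"
  by (induct S rule: infinite_finite_induct) auto

lemma Dual_split: "Dual a b = Dual a 0 + deps * Dual b 0"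
  by (simp add: dual_eq_iff)

lemma Dual_real: "Dual a 0 + Dual b 0 = Dual (a + b) 0" "Dual a 0 * Dual b 0 = Dual (a * b) 0"
  "Dual 1 0 = 1" "Dual 0 0 = 0" "Dual a 0 * Dual 0 b = Dual 0 (a * b)"
  by (simp_all add: dual_eq_iff)

locale dm =
  fixes smul :: "dual \<Rightarrow> 'm::ab_group_add \<Rightarrow> 'm" and sp :: "'m \<Rightarrow> 'm \<Rightarrow> dual" and b0 :: "'m^3"
  assumes M: "module smul" and SP: "is_scalar_product smul sp" and B0: "is_dbasis smul b0"
begin

sublocale M: module smul by (rule M)

lemma R_vs: "vector_space (rscale smul)"
  unfolding vector_space_def rscale_def
  by (simp add: M.scale_right_distrib M.scale_left_distrib[symmetric] Dual_real)

sublocale R: vector_space "rscale smul" by (rule R_vs)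

abbreviation "EM \<equiv> epsM smul"
abbreviation "rs \<equiv> rscale smul"
abbreviation "ee x \<equiv> smul deps x"

lemma rs_def: "rs a x = smul (Dual a 0) x" by (simp add: rscale_def)

lemma smul_Dual: "smul (Dual a b) x = rs a x + ee (rs b x)"
  by (simp add: rs_def Dual_split[of a b] M.scale_left_distrib)

lemma ee_ee[simp]: "ee (ee x) = 0"
proof -
  have "deps * deps = 0" by (simp add: dual_eq_iff)
  then show ?thesis by simp
qed

lemma ee_rs: "ee (rs a x) = rs a (ee x)"
  by (simp add: rs_def mult.commute)

lemma sp_sym: "sp x y = sp y x" using SP unfolding is_scalar_product_def by blast
lemma sp_add_l: "sp (x + y) w = sp x w + sp y w" using SP unfolding is_scalar_product_def by blast
lemma sp_smul_l: "sp (smul a x) w = a * sp x w" using SP unfolding is_scalar_product_def by blast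
lemma sp_add_r: "sp w (x + y) = sp w x + sp w y" by (metis sp_sym sp_add_l)
lemma sp_smul_r: "sp w (smul a x) = a * sp w x" by (metis sp_sym sp_smul_l)
lemma sp_zero_l[simp]: "sp 0 w = 0" using sp_smul_l[of 0 0 w] by simp
lemma sp_zero_r[simp]: "sp w 0 = 0" by (metis sp_sym sp_zero_l)
lemma sp_minus_l: "sp (- x) w = - sp x w"
proof -
  have "sp (- x) w + sp x w = 0" using sp_add_l[of "-x" x w] by simp
  then show ?thesis by (simp add: eq_neg_iff_add_eq_0)
qed
lemma sp_minus_r: "sp w (- x) = - sp w x" by (metis sp_sym sp_minus_l)
lemma sp_diff_l: "sp (x - y) w = sp x w - sp y w"
  by (simp only: diff_conv_add_uminus sp_add_l sp_minus_l)
lemma sp_diff_r: "sp w (x - y) = sp w x - sp w y"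
  by (simp only: diff_conv_add_uminus sp_add_r sp_minus_r)
lemma sp_sum_l: "sp (sum f S) w = (\<Sum>x\<in>S. sp (f x) w)"
  by (induct S rule: infinite_finite_induct) (auto simp: sp_add_l)
lemma sp_sum_r: "sp w (sum f S) = (\<Sum>x\<in>S. sp w (f x))"
  by (induct S rule: infinite_finite_induct) (auto simp: sp_add_r)
lemma sp_rs_l: "sp (rs a x) w = Dual a 0 * sp x w" by (simp add: rs_def sp_smul_l)
lemma sp_rs_r: "sp w (rs a x) = Dual a 0 * sp w x" by (simp add: rs_def sp_smul_r)
lemma sp_ee_l: "sp (ee x) w = deps * sp x w" by (simp add: sp_smul_l)
lemma sp_ee_r: "sp w (ee x) = deps * sp w x" by (simp add: sp_smul_r)
lemma sp_pos: "dre (sp x x) \<ge> 0" using SP unfolding is_scalar_product_def by blast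
lemma sp_zero_iff: "dre (sp x x) = 0 \<longleftrightarrow> x \<in> EM" using SP unfolding is_scalar_product_def by blast

lemma EM_iff: "x \<in> EM \<longleftrightarrow> (\<exists>t. x = ee t)" by (auto simp: epsM_def)
lemma EM_ee[simp]: "ee t \<in> EM" by (auto simp: epsM_def)
lemma EM_0[simp]: "0 \<in> EM" using EM_ee[of 0] by simp
lemma EM_add: "x \<in> EM \<Longrightarrow> y \<in> EM \<Longrightarrow> x + y \<in> EM"
  by (auto simp: EM_iff M.scale_right_distrib[symmetric])
lemma EM_minus: "x \<in> EM \<Longrightarrow> - x \<in> EM"
  by (auto simp: EM_iff M.scale_minus_right[symmetric] simp del: M.scale_minus_right)
lemma EM_diff: "x \<in> EM \<Longrightarrow> y \<in> EM \<Longrightarrow> x - y \<in> EM"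
  by (auto simp: EM_iff M.scale_right_diff_distrib[symmetric])
lemma EM_smul: "x \<in> EM \<Longrightarrow> smul a x \<in> EM"
  unfolding EM_iff by (metis M.scale_scale mult.commute)
lemma EM_rs: "x \<in> EM \<Longrightarrow> rs a x \<in> EM" by (simp add: rs_def EM_smul)
lemma EM_sum: "(\<And>i. i \<in> S \<Longrightarrow> f i \<in> EM) \<Longrightarrow> sum f S \<in> EM"
  by (induct S rule: infinite_finite_induct) (auto intro: EM_add)
lemma EM_dre_sp: "x \<in> EM \<Longrightarrow> dre (sp x y) = 0" by (auto simp: EM_iff sp_ee_l)
lemma EM_dre_sp_r: "x \<in> EM \<Longrightarrow> dre (sp y x) = 0" by (auto simp: EM_iff sp_ee_r)

end

lemma lin_inj_surj: "linear (g::real^3 \<Rightarrow> real^3) \<Longrightarrow> inj g \<Longrightarrow> surj g"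
  by (simp add: linear_injective_imp_surjective)

context dm begin

definition coef :: "'m \<Rightarrow> dual^3" where
  "coef x = (THE c. x = (\<Sum>i\<in>UNIV. smul (c$i) (b0$i)))"

lemma coef_ex1: "\<exists>!c. x = (\<Sum>i\<in>UNIV. smul (c$i) (b0$i))"
  using B0 unfolding is_dbasis_def by blast

lemma coef_rep: "x = (\<Sum>i\<in>UNIV. smul (coef x $ i) (b0$i))"
  unfolding coef_def by (rule theI'[OF coef_ex1])

lemma coef_unique: "x = (\<Sum>i\<in>UNIV. smul (c$i) (b0$i)) \<Longrightarrow> coef x = c"
  using coef_ex1[of x] coef_rep[of x] by blast

lemma coef_add: "coef (x + y) = coef x + coef y"
proof (rule coef_unique)
  show "x + y = (\<Sum>i\<in>UNIV. smul ((coef x + coef y) $ i) (b0 $ i))"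
    by (subst coef_rep[of x], subst coef_rep[of y]) (simp add: M.scale_left_distrib sum.distrib)
qed

lemma coef_smul: "coef (smul a x) = (\<chi> i. a * coef x $ i)"
proof (rule coef_unique)
  show "smul a x = (\<Sum>i\<in>UNIV. smul ((\<chi> i. a * coef x $ i) $ i) (b0 $ i))"
    by (subst coef_rep[of x]) (simp add: M.scale_sum_right)
qed

definition rc :: "'m \<Rightarrow> real^3" where "rc x = (\<chi> i. dre (coef x $ i))"

lemma rc_add: "rc (x + y) = rc x + rc y"
  by (simp add: rc_def coef_add vec_eq_iff)

lemma rc_rs: "rc (rs a x) = a *\<^sub>R rc x"
  by (simp add: rc_def rs_def coef_smul vec_eq_iff)

lemma rc_ee: "rc (ee x) = 0"
  by (simp add: rc_def coef_smul vec_eq_iff)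

lemma rc_zero_iff: "rc x = 0 \<longleftrightarrow> x \<in> EM"
proof
  assume "x \<in> EM" then show "rc x = 0" by (auto simp: EM_iff rc_ee)
next
  assume h: "rc x = 0"
  have "coef x $ i = deps * Dual (ddu (coef x $ i)) 0" for i
    using h by (simp add: rc_def vec_eq_iff dual_eq_iff)
  then have "x = (\<Sum>i\<in>UNIV. ee (smul (Dual (ddu (coef x $ i)) 0) (b0$i)))"
    by (subst coef_rep[of x]) simp
  also have "\<dots> = ee (\<Sum>i\<in>UNIV. smul (Dual (ddu (coef x $ i)) 0) (b0$i))"
    by (simp add: M.scale_sum_right)
  finally show "x \<in> EM" by (metis EM_ee)
qed

lemma rc_0[simp]: "rc 0 = 0" using rc_zero_iff by simp

lemma rc_diff: "rc (x - y) = rc x - rc y"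
  using rc_add[of "x - y" y] by (simp add: eq_diff_eq)

lemma rc_sum: "rc (sum f S) = (\<Sum>i\<in>S. rc (f i))"
  by (induct S rule: infinite_finite_induct) (auto simp: rc_add)

lemma rc_eq_iff: "rc x = rc y \<longleftrightarrow> x - y \<in> EM"
  using rc_zero_iff[of "x - y"] by (simp add: rc_diff)

lemma dim3:
  fixes q :: "'m^3"
  assumes ind: "\<And>l::real^3. (\<Sum>i\<in>UNIV. rs (l$i) (q$i)) \<in> EM \<Longrightarrow> l = 0"
  shows "\<exists>l::real^3. x - (\<Sum>i\<in>UNIV. rs (l$i) (q$i)) \<in> EM"
proof -
  define g where "g l = rc (\<Sum>i\<in>UNIV. rs (l$i) (q$i))" for l :: "real^3"
  have lin: "linear g"
  proof (rule linearI)
    fix l m :: "real^3" and c :: real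
    show "g (l + m) = g l + g m"
      unfolding g_def by (simp add: R.scale_left_distrib sum.distrib rc_add rc_sum)
    show "g (c *\<^sub>R l) = c *\<^sub>R g l"
      unfolding g_def by (simp add: R.scale_scale[symmetric] rc_rs rc_sum scaleR_sum_right del: R.scale_scale)
  qed
  have "inj g"
    unfolding linear_injective_0[OF lin]
  proof (intro allI impI)
    fix l assume "g l = 0"
    then show "l = 0" using ind by (simp add: g_def rc_zero_iff)
  qed
  then obtain l where "g l = rc x" using lin_inj_surj[OF lin] by (metis surjD)
  then have "rc x - g l = 0" by simp
  then show ?thesis unfolding g_def by (metis rc_diff rc_zero_iff)
qed

end

abbreviation ex :: "3 \<Rightarrow> real^3" where "ex i \<equiv> Finite_Cartesian_Product.axis i 1"

context dm begin

lemma deps_sq[simp]: "deps * deps = 0" by (simp add: dual_eq_iff)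

lemma Espace_D:
  assumes "P \<in> Espace smul sp"
  shows "R.subspace P" "\<And>x y. x \<in> P \<Longrightarrow> y \<in> P \<Longrightarrow> ddu (sp x y) = 0"
    "\<And>x. x \<in> P \<Longrightarrow> x \<in> EM \<Longrightarrow> x = 0"
  using assms by (auto simp: Espace_def real_dim3_subspace_def)

lemma lift_ex1:
  assumes P: "P \<in> Espace smul sp"
  shows "\<exists>!x. x \<in> P \<and> x - v \<in> EM"
proof -
  from P obtain B where B: "finite B" "card B = 3" "\<not> R.dependent B" "R.span B = P"
    and sub: "R.subspace P" and PE: "P \<inter> EM = {0}"
    by (auto simp: Espace_def real_dim3_subspace_def)
  from B(2) obtain q1 q2 q3 where q: "B = {q1, q2, q3}" "q1 \<noteq> q2" "q2 \<noteq> q3" "q1 \<noteq> q3"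
    by (auto simp: card_3_iff)
  define q :: "'m^3" where "q = vector [q1, q2, q3]"
  have sumq: "(\<Sum>i\<in>UNIV. rs (l$i) (q$i)) = rs (l$1) q1 + rs (l$2) q2 + rs (l$3) q3" for l :: "real^3"
    by (simp add: sum_3 q_def)
  have inP: "(\<Sum>i\<in>UNIV. rs (l$i) (q$i)) \<in> P" for l :: "real^3"
    unfolding sumq B(4)[symmetric] q(1)
    by (intro R.span_add R.span_scale R.span_base) auto
  have ind: "l = 0" if "(\<Sum>i\<in>UNIV. rs (l$i) (q$i)) \<in> EM" for l :: "real^3"
  proof -
    have "(\<Sum>i\<in>UNIV. rs (l$i) (q$i)) = 0" using inP[of l] that PE by blast
    then have z: "rs (l$1) q1 + rs (l$2) q2 + rs (l$3) q3 = 0" using sumq[of l] by metis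
    define u where "u v = (if v = q1 then l$1 else if v = q2 then l$2 else l$3)" for v
    have "(\<Sum>v\<in>B. rs (u v) v) = 0" using z q by (simp add: u_def add.assoc)
    then have uz: "u v = 0" if "v \<in> B" for v
      using R.independentD[OF B(3) B(1) order_refl] that by blast
    have "u q1 = 0" "u q2 = 0" "u q3 = 0" using uz[of q1] uz[of q2] uz[of q3] q(1) by simp_all
    then show "l = 0" using q by (auto simp: u_def vec_eq_iff forall_3)
  qed
  obtain l where l: "v - (\<Sum>i\<in>UNIV. rs (l$i) (q$i)) \<in> EM" using dim3[OF ind] by blast
  define sl where "sl = (\<Sum>i\<in>UNIV. rs (l$i) (q$i))"
  have slP: "sl \<in> P" unfolding sl_def by (rule inP)
  have slv: "sl - v \<in> EM" using EM_minus[OF l] unfolding sl_def by (simp add: minus_diff_eq)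
  show ?thesis
  proof (rule ex1I[of _ sl])
    show "sl \<in> P \<and> sl - v \<in> EM" using slP slv by blast
    fix y assume y: "y \<in> P \<and> y - v \<in> EM"
    have 1: "y - sl \<in> P" using y slP sub R.subspace_diff by blast
    have "y - sl = (y - v) - (sl - v)" by simp
    then have 2: "y - sl \<in> EM" using EM_diff y slv by metis
    have "y - sl = 0" using 1 2 PE by blast
    then show "y = sl" by simp
  qed
qed

lemma lift_in:
  assumes "P \<in> Espace smul sp"
  shows "lift_to smul P v \<in> P" "lift_to smul P v - v \<in> EM"
  using theI'[OF lift_ex1[OF assms, of v]] unfolding lift_to_def by auto

lemma lift_eq:
  assumes "P \<in> Espace smul sp" "x \<in> P" "x - v \<in> EM"
  shows "lift_to smul P v = x"
  using lift_ex1[OF assms(1), of v] lift_in[OF assms(1), of v] assms(2,3) by blast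

definition onb :: "'m^3 \<Rightarrow> bool" where
  "onb a \<longleftrightarrow> (\<forall>i j. sp (a$i) (a$j) = (if i = j then 1 else 0))"

definition dorth :: "'m^3 \<Rightarrow> bool" where
  "dorth f \<longleftrightarrow> (\<forall>i j. dre (sp (f$i) (f$j)) = (if i = j then 1 else 0))"

lemma dre_sp_EM_shift:
  assumes "x - x' \<in> EM" "y - y' \<in> EM"
  shows "dre (sp x y) = dre (sp x' y')"
proof -
  have e: "sp (x' + (x - x')) (y' + (y - y')) = sp x' y' + sp x' (y - y') + (sp (x - x') y' + sp (x - x') (y - y'))"
    by (simp only: sp_add_l sp_add_r add_ac)
  have "sp x y = sp x' y' + sp x' (y - y') + (sp (x - x') y' + sp (x - x') (y - y'))"
    using e by simp
  then show ?thesis using assms EM_dre_sp EM_dre_sp_r by simp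
qed

lemma onb_lift:
  assumes f: "dorth f" and A: "A \<in> Espace smul sp"
  shows "onb (\<chi> i. lift_to smul A (f$i))"
  unfolding onb_def
proof (intro allI)
  fix i j
  let ?a = "\<lambda>i. lift_to smul A (f$i)"
  have "dre (sp (?a i) (?a j)) = dre (sp (f$i) (f$j))"
    using lift_in(2)[OF A] by (intro dre_sp_EM_shift)
  moreover have "ddu (sp (?a i) (?a j)) = 0" using Espace_D(2)[OF A] lift_in(1)[OF A] by blast
  ultimately show "sp ((\<chi> i. ?a i) $ i) ((\<chi> i. ?a i) $ j) = (if i = j then 1 else 0)"
    using f unfolding dorth_def by (simp add: dual_eq_iff)
qed

end

locale onbl = dm +
  fixes a :: "'a^3"
  assumes ONB: "\<And>i j. sp (a$i) (a$j) = (if i = j then 1 else 0)"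
begin

lemma sp_a: "sp (a$i) (a$j) = (if i = j then 1 else 0)" using ONB by simp

lemma sum_delta_mult: "(\<Sum>j\<in>UNIV. c j * (if j = k then 1 else 0)) = (c (k::3) :: dual)"
  using exhaust_3[of k] by (auto simp: sum_3)

lemma sum_delta_mult': "(\<Sum>j\<in>UNIV. c j * (if k = j then 1 else 0)) = (c (k::3) :: dual)"
  using exhaust_3[of k] by (auto simp: sum_3)

lemma sp_rs_sum_a: "sp (\<Sum>i\<in>UNIV. rs (l$i) (a$i)) (a$k) = Dual (l$k) 0"
  by (simp add: sp_sum_l sp_rs_l sp_a if_distrib cong: if_cong)

lemma rep: "x = (\<Sum>j\<in>UNIV. smul (sp x (a$j)) (a$j))"
proof -
  have ind: "l = 0" if "(\<Sum>i\<in>UNIV. rs (l$i) (a$i)) \<in> EM" for l :: "real^3"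
  proof -
    have "l$k = 0" for k using EM_dre_sp[OF that, of "a$k"] by (simp add: sp_rs_sum_a)
    then show ?thesis by (simp add: vec_eq_iff)
  qed
  have toEM: "y \<in> EM" if "\<And>k. dre (sp y (a$k)) = 0" for y
  proof -
    obtain l where l: "y - (\<Sum>i\<in>UNIV. rs (l$i) (a$i)) \<in> EM" using dim3[OF ind] by blast
    have "dre (sp (y - (\<Sum>i\<in>UNIV. rs (l$i) (a$i))) (a$k)) = 0" for k using EM_dre_sp[OF l] .
    then have "l$k = 0" for k using that[of k] by (simp add: sp_diff_l sp_rs_sum_a)
    then have "l = 0" by (simp add: vec_eq_iff)
    then show ?thesis using l by simp
  qed
  define y where "y = x - (\<Sum>j\<in>UNIV. smul (sp x (a$j)) (a$j))"
  have spy: "sp y (a$k) = 0" for k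
    by (simp add: y_def sp_diff_l sp_sum_l sp_smul_l sp_a sum_delta_mult)
  then have "y \<in> EM" using toEM by simp
  then obtain t where t: "y = ee t" by (auto simp: EM_iff)
  have "deps * sp t (a$k) = 0" for k using spy[of k] t by (simp add: sp_ee_l)
  then have "dre (sp t (a$k)) = 0" for k by (simp add: dual_eq_iff)
  then have "t \<in> EM" using toEM by simp
  then have "y = 0" using t by (auto simp: EM_iff)
  then show ?thesis by (simp add: y_def)
qed

definition re :: "'a \<Rightarrow> real^3" where "re x = (\<chi> j. dre (sp x (a$j)))"
definition du :: "'a \<Rightarrow> real^3" where "du x = (\<chi> j. ddu (sp x (a$j)))"

lemma re_add: "re (x + y) = re x + re y" by (simp add: re_def sp_add_l vec_eq_iff)
lemma du_add: "du (x + y) = du x + du y" by (simp add: du_def sp_add_l vec_eq_iff)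
lemma re_diff: "re (x - y) = re x - re y" by (simp add: re_def sp_diff_l vec_eq_iff)
lemma du_diff: "du (x - y) = du x - du y" by (simp add: du_def sp_diff_l vec_eq_iff)
lemma re_rs: "re (rs c x) = c *\<^sub>R re x" by (simp add: re_def sp_rs_l vec_eq_iff)
lemma du_rs: "du (rs c x) = c *\<^sub>R du x" by (simp add: du_def sp_rs_l vec_eq_iff)
lemma re_ee: "re (ee x) = 0" by (simp add: re_def sp_ee_l vec_eq_iff)
lemma du_ee: "du (ee x) = re x" by (simp add: du_def re_def sp_ee_l vec_eq_iff)
lemma re_0[simp]: "re 0 = 0" by (simp add: re_def vec_eq_iff)
lemma du_0[simp]: "du 0 = 0" by (simp add: du_def vec_eq_iff)
lemma re_sum: "re (sum f S) = (\<Sum>i\<in>S. re (f i))"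
  by (induct S rule: infinite_finite_induct) (auto simp: re_add)
lemma du_sum: "du (sum f S) = (\<Sum>i\<in>S. du (f i))"
  by (induct S rule: infinite_finite_induct) (auto simp: du_add)
lemma re_a: "re (a$i) = ex i"
  by (simp add: re_def sp_a vec_eq_iff Finite_Cartesian_Product.axis_def)
lemma du_a: "du (a$i) = 0"
  by (simp add: du_def sp_a vec_eq_iff)
lemma re_Dual0: "re (smul (Dual 0 c) x) = 0" by (simp add: smul_Dual re_ee)
lemma du_Dual0: "du (smul (Dual 0 c) x) = c *\<^sub>R re x" by (simp add: smul_Dual du_ee re_rs)

lemma eq_iff: "x = y \<longleftrightarrow> re x = re y \<and> du x = du y"
proof
  assume "re x = re y \<and> du x = du y"
  then have "sp x (a$j) = sp y (a$j)" for j
    by (simp add: re_def du_def vec_eq_iff dual_eq_iff)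
  then show "x = y" by (subst rep[of x], subst rep[of y]) simp
qed simp

lemma EM_re: "x \<in> EM \<longleftrightarrow> re x = 0"
proof
  assume "x \<in> EM" then show "re x = 0" by (auto simp: EM_iff re_ee)
next
  assume h: "re x = 0"
  have "sp x (a$j) = Dual 0 (du x $ j)" for j
    using h by (simp add: re_def du_def vec_eq_iff dual_eq_iff)
  then have "x = (\<Sum>j\<in>UNIV. ee (rs (du x $ j) (a$j)))"
    by (subst rep[of x]) (simp add: smul_Dual)
  then show "x \<in> EM" by (metis EM_ee M.scale_sum_right)
qed

definition mk :: "real^3 \<Rightarrow> real^3 \<Rightarrow> 'a" where
  "mk r s = (\<Sum>j\<in>UNIV. rs (r$j) (a$j)) + ee (\<Sum>j\<in>UNIV. rs (s$j) (a$j))"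

lemma re_lin: "re (\<Sum>j\<in>UNIV. rs (r$j) (a$j)) = r"
  by (simp add: re_sum re_rs re_a vec_eq_iff Finite_Cartesian_Product.axis_def if_distrib cong: if_cong)
lemma du_lin: "du (\<Sum>j\<in>UNIV. rs (r$j) (a$j)) = 0"
  by (simp add: du_sum du_rs du_a)
lemma re_mk[simp]: "re (mk r s) = r" by (simp add: mk_def re_add re_ee re_lin)
lemma du_mk[simp]: "du (mk r s) = s" by (simp add: mk_def du_add du_ee re_lin du_lin)

lemma sp_coords: "sp x y = Dual (re x \<bullet> re y) (re x \<bullet> du y + du x \<bullet> re y)"
proof -
  have "sp x y = sp x (\<Sum>j\<in>UNIV. smul (sp y (a$j)) (a$j))" by (subst rep[of y]) simp
  also have "\<dots> = (\<Sum>j\<in>UNIV. sp y (a$j) * sp x (a$j))" by (simp add: sp_sum_r sp_smul_r)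
  finally show ?thesis
    by (simp add: dual_eq_iff dre_sum ddu_sum re_def du_def inner_vec_def algebra_simps sum.distrib)
qed

end

lemmas c3 = cross3_simps forall_3 Finite_Cartesian_Product.axis_def

lemma levi_cross: "(\<Sum>j\<in>UNIV. \<Sum>k\<in>UNIV. (levi i j k * d$k) *\<^sub>R ex j) = cross3 d (ex i)"
  using exhaust_3[of i] by (auto simp: levi_def sum_3 cross3_simps Finite_Cartesian_Product.axis_def)

lemma cross_axis_inj: "(\<And>i. cross3 D (ex i) = cross3 d (ex i)) \<Longrightarrow> D = d"
proof -
  assume h: "\<And>i. cross3 D (ex i) = cross3 d (ex i)"
  have "cross3 D (ex 1) = cross3 d (ex 1)" "cross3 D (ex 2) = cross3 d (ex 2)" using h by auto
  then show "D = d" by (simp add: c3)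
qed

context dm begin

lemma indep3:
  assumes d: "y1 \<noteq> y2" "y2 \<noteq> y3" "y1 \<noteq> y3"
    and H: "\<And>l1 l2 l3. rs l1 y1 + rs l2 y2 + rs l3 y3 = 0 \<Longrightarrow> l1 = 0 \<and> l2 = 0 \<and> l3 = 0"
  shows "\<not> R.dependent {y1, y2, y3}"
proof -
  have "y3 \<notin> R.span {}"
  proof
    assume "y3 \<in> R.span {}"
    then have "y3 = 0" by simp
    then show False using H[of 0 0 1] by (simp add: rs_def Dual_real)
  qed
  then have i3: "\<not> R.dependent {y3}" using R.independent_insertI[OF _ R.independent_empty] by blast
  have "y2 \<notin> R.span {y3}"
  proof
    assume "y2 \<in> R.span {y3}"
    then obtain k where "y2 - rs k y3 \<in> R.span {}" using R.span_breakdown_eq by blast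
    then have "rs 0 y1 + rs 1 y2 + rs (-k) y3 = 0" by (simp add: rs_def[symmetric] R.scale_minus_left)
    then show False using H by fastforce
  qed
  then have i2: "\<not> R.dependent {y2, y3}" using R.independent_insertI[OF _ i3] by blast
  have "y1 \<notin> R.span {y2, y3}"
  proof
    assume "y1 \<in> R.span {y2, y3}"
    then obtain k where "y1 - rs k y2 \<in> R.span {y3}" using R.span_breakdown_eq by blast
    then obtain k' where "y1 - rs k y2 - rs k' y3 \<in> R.span {}" using R.span_breakdown_eq by blast
    then have "rs 1 y1 + rs (-k) y2 + rs (-k') y3 = 0"
      by (simp add: R.scale_minus_left algebra_simps)
    then show False using H by fastforce
  qed
  then show ?thesis using R.independent_insertI[OF _ i2] by blast
qed

end

context onbl begin

definition PD :: "real^3 \<Rightarrow> 'a set" where "PD D = {x. du x = cross3 D (re x)}"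

lemma PD_sub: "R.subspace (PD D)"
  unfolding R.subspace_def PD_def
  by (auto simp: re_add du_add re_rs du_rs cross_add_right cross_mult_right)

lemma PD_E: "PD D \<in> Espace smul sp"
proof -
  define p where "p i = mk (ex i) (cross3 D (ex i))" for i
  have pin: "p i \<in> PD D" for i by (simp add: PD_def p_def)
  have rep_p: "re (p i) = ex i" for i by (simp add: p_def)
  have pne: "p i \<noteq> p j" if "i \<noteq> j" for i j
  proof
    assume "p i = p j"
    then have "re (p i) $ i = re (p j) $ i" by simp
    then show False using that by (simp add: rep_p Finite_Cartesian_Product.axis_def)
  qed
  have ind: "\<not> R.dependent {p 1, p 2, p 3}"
  proof (rule indep3)
    show "p 1 \<noteq> p 2" "p 2 \<noteq> p 3" "p 1 \<noteq> p 3" by (auto intro!: pne)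
    fix l1 l2 l3 assume "rs l1 (p 1) + rs l2 (p 2) + rs l3 (p 3) = 0"
    then have "re (rs l1 (p 1) + rs l2 (p 2) + rs l3 (p 3)) = 0" by simp
    then show "l1 = 0 \<and> l2 = 0 \<and> l3 = 0" by (simp add: re_add re_rs rep_p c3)
  qed
  have card: "card {p 1, p 2, p 3} = 3" using pne by (auto simp: card_insert_if)
  have span: "R.span {p 1, p 2, p 3} = PD D"
  proof
    show "R.span {p 1, p 2, p 3} \<subseteq> PD D" using pin PD_sub by (intro R.span_minimal) auto
    show "PD D \<subseteq> R.span {p 1, p 2, p 3}"
    proof
      fix x assume x: "x \<in> PD D"
      have "x = rs (re x $ 1) (p 1) + rs (re x $ 2) (p 2) + rs (re x $ 3) (p 3)"
        unfolding eq_iff using x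
        by (simp add: re_add re_rs du_add du_rs p_def PD_def) (simp add: c3)
      also have "\<dots> \<in> R.span {p 1, p 2, p 3}"
        by (intro R.span_add R.span_scale R.span_base) auto
      finally show "x \<in> R.span {p 1, p 2, p 3}" .
    qed
  qed
  have ddu0: "ddu (sp x y) = 0" if "x \<in> PD D" "y \<in> PD D" for x y
    using that by (simp add: sp_coords PD_def) (simp add: c3)
  have int: "PD D \<inter> EM = {0}"
  proof safe
    fix x assume "x \<in> PD D" "x \<in> EM"
    then have "re x = 0" "du x = 0" by (auto simp: PD_def EM_re)
    then show "x = 0" by (simp add: eq_iff)
  next
    show "0 \<in> PD D" by (simp add: PD_def)
  qed simp
  show ?thesis unfolding Espace_def real_dim3_subspace_def
  proof (intro CollectI conjI)
    show "R.subspace (PD D)" by (rule PD_sub)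
    show "\<exists>B. finite B \<and> card B = 3 \<and> \<not> R.dependent B \<and> R.span B = PD D"
      using ind card span by (intro exI[of _ "{p 1, p 2, p 3}"]) simp
    show "\<forall>x\<in>PD D. \<forall>y\<in>PD D. ddu (sp x y) = 0" using ddu0 by blast
    show "PD D \<inter> EM = {0}" by (rule int)
  qed
qed

end

locale onbA = onbl +
  fixes f :: "'a^3" and A :: "'a set"
  assumes A: "A \<in> Espace smul sp" and a_lift: "\<And>i. a$i = lift_to smul A (f$i)"
begin

lemma re_f: "re (f$i) = ex i"
proof -
  have "a$i - f$i \<in> EM" using lift_in(2)[OF A] a_lift by simp
  then have "re (a$i - f$i) = 0" by (simp add: EM_re)
  then show ?thesis by (simp add: re_diff re_a)
qed

lemma coords_in:
  assumes P: "P \<in> Espace smul sp" and p: "\<And>i. p i \<in> P" "\<And>i. re (p i) = ex i" and x: "x \<in> P"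
  shows "du x = (\<Sum>i\<in>UNIV. re x $ i *\<^sub>R du (p i))"
proof -
  have sub: "R.subspace P" using Espace_D(1)[OF P] .
  define y where "y = x - (\<Sum>i\<in>UNIV. rs (re x $ i) (p i))"
  have "(\<Sum>i\<in>UNIV. rs (re x $ i) (p i)) \<in> P"
    using p(1) sub by (intro R.subspace_sum R.subspace_scale) auto
  then have yP: "y \<in> P" unfolding y_def using x sub R.subspace_diff by blast
  have "re y = 0" unfolding y_def
    by (simp add: re_diff re_sum re_rs p(2)) (simp add: c3)
  then have "y = 0" using Espace_D(3)[OF P yP] EM_re by blast
  then have eqx: "x = (\<Sum>i\<in>UNIV. rs (re x $ i) (p i))" unfolding y_def by simp
  have "du x = du (\<Sum>i\<in>UNIV. rs (re x $ i) (p i))" using arg_cong[OF eqx, of du] .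
  also have "\<dots> = (\<Sum>i\<in>UNIV. re x $ i *\<^sub>R du (p i))" by (simp add: du_sum du_rs)
  finally show ?thesis .
qed

lemma A_du: "x \<in> A \<Longrightarrow> du x = 0"
  using coords_in[OF A, of "\<lambda>i. a$i" x] lift_in(1)[OF A] a_lift re_a du_a by simp

lemma lift_re:
  assumes P: "P \<in> Espace smul sp"
  shows "re (lift_to smul P (f$i)) = ex i"
proof -
  have "lift_to smul P (f$i) - f$i \<in> EM" using lift_in(2)[OF P] .
  then have "re (lift_to smul P (f$i) - f$i) = 0" by (simp add: EM_re)
  then show ?thesis by (simp add: re_diff re_f)
qed

lemma ExistsD:
  assumes P: "P \<in> Espace smul sp"
  shows "\<exists>D. \<forall>x\<in>P. du x = cross3 D (re x)"
proof -
  define p where "p i = lift_to smul P (f$i)" for i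
  have pP: "p i \<in> P" for i unfolding p_def by (rule lift_in(1)[OF P])
  have pre: "re (p i) = ex i" for i unfolding p_def by (rule lift_re[OF P])
  define t where "t i = du (p i)" for i
  have sk: "t j $ i + t i $ j = 0" for i j
  proof -
    have "ddu (sp (p i) (p j)) = 0" using Espace_D(2)[OF P pP pP] .
    then show ?thesis by (simp add: sp_coords pre t_def inner_axis inner_axis' inner_commute)
  qed
  have sk0: "t i $ i = 0" for i using sk[of i i] by simp
  define D :: "real^3" where "D = vector [t 2 $ 3, t 3 $ 1, t 1 $ 2]"
  show ?thesis
  proof (intro exI ballI)
    fix x assume x: "x \<in> P"
    have "du x = (\<Sum>i\<in>UNIV. re x $ i *\<^sub>R t i)"
      using coords_in[OF P pP pre x] by (simp add: t_def)
    also have "\<dots> = cross3 D (re x)"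
    proof -
      have e: "t 2 $ 1 = - (t 1 $ 2)" "t 3 $ 1 = - (t 1 $ 3)" "t 3 $ 2 = - (t 2 $ 3)"
        using sk[of 1 2] sk[of 1 3] sk[of 2 3] by (simp_all add: eq_neg_iff_add_eq_0 add.commute)
      show ?thesis using sk0[of 1] sk0[of 2] sk0[of 3] e by (simp add: D_def c3)
    qed
    finally show "du x = cross3 D (re x)" .
  qed
qed

lemma EdiffChar:
  assumes P: "P \<in> Espace smul sp" and H: "\<forall>x\<in>P. du x = cross3 D (re x)"
  shows "Ediff smul f P A = D"
proof -
  have liftA: "lift_to smul A (f$j) = a$j" for j using a_lift by simp
  have re_dsum: "re (\<Sum>j\<in>UNIV. \<Sum>k\<in>UNIV. smul (Dual 0 (c j k)) (a$j)) = 0" for c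
    by (simp add: re_sum re_Dual0)
  have du_dsum: "du (\<Sum>j\<in>UNIV. \<Sum>k\<in>UNIV. smul (Dual 0 (levi i j k * d$k)) (a$j)) = cross3 d (ex i)" for i d
    by (simp add: du_sum du_Dual0 re_a levi_cross)
  have duP: "du (lift_to smul P (f$i)) = cross3 D (ex i)" for i
    using H lift_in(1)[OF P] lift_re[OF P] by metis
  show ?thesis unfolding Ediff_def
  proof (rule the_equality)
    show "\<forall>i. lift_to smul P (f$i) = lift_to smul A (f$i) +
        (\<Sum>j\<in>UNIV. \<Sum>k\<in>UNIV. smul (Dual 0 (levi i j k * D$k)) (lift_to smul A (f$j)))"
      unfolding liftA
      by (simp add: eq_iff re_add du_add re_dsum du_dsum lift_re[OF P] re_a du_a duP)
    fix d assume h: "\<forall>i. lift_to smul P (f$i) = lift_to smul A (f$i) +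
        (\<Sum>j\<in>UNIV. \<Sum>k\<in>UNIV. smul (Dual 0 (levi i j k * d$k)) (lift_to smul A (f$j)))"
    have "cross3 D (ex i) = cross3 d (ex i)" for i
    proof -
      have "du (lift_to smul P (f$i)) = du (a$i + (\<Sum>j\<in>UNIV. \<Sum>k\<in>UNIV. smul (Dual 0 (levi i j k * d$k)) (a$j)))"
        using h unfolding liftA by metis
      then show ?thesis by (simp add: du_add du_a du_dsum duP)
    qed
    then show "d = D" using cross_axis_inj by metis
  qed
qed

end

context dm begin

lemma polar_ex:
  assumes z: "z \<notin> EM"
  shows "\<exists>a b u. polar_decomp smul sp z a b u"
proof -
  define p where "p = dre (sp z z)"
  define q where "q = ddu (sp z z)"
  have p: "p > 0" using sp_pos[of z] sp_zero_iff[of z] z unfolding p_def by linarith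
  define \<alpha> where "\<alpha> = sqrt p"
  have al: "\<alpha> > 0" "\<alpha> * \<alpha> = p" using p by (auto simp: \<alpha>_def)
  define \<beta> where "\<beta> = q / (2 * \<alpha>)"
  define c where "c = Dual (1/\<alpha>) (- \<beta> / (\<alpha> * \<alpha>))"
  define u where "u = smul c z"
  have c1: "Dual \<alpha> \<beta> * c = 1" using al(1) unfolding c_def by (simp add: dual_eq_iff field_simps)
  have p_eq: "p = \<alpha> * \<alpha>" using al(2) by simp
  have "smul (Dual \<alpha> \<beta>) u = z" unfolding u_def using c1 by simp
  moreover have "sp u u = 1"
  proof -
    have "sp u u = c * c * sp z z" unfolding u_def by (simp add: sp_smul_l sp_smul_r mult.assoc)
    also have "sp z z = Dual p q" unfolding p_def q_def by (simp add: dual_eq_iff)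
    finally show ?thesis using al(1) unfolding c_def \<beta>_def p_eq
      by (simp add: dual_eq_iff field_simps)
  qed
  ultimately show ?thesis using al unfolding polar_decomp_def by metis
qed

lemma polar_uniq:
  assumes "polar_decomp smul sp z a b u" "polar_decomp smul sp z a' b' u'"
  shows "a = a' \<and> b = b' \<and> u = u'"
proof -
  have a: "a > 0" "a' > 0" and zu: "z = smul (Dual a b) u" "z = smul (Dual a' b') u'"
    and uu: "sp u u = 1" "sp u' u' = 1" using assms by (auto simp: polar_decomp_def)
  have "sp z z = Dual a b * Dual a b" using zu(1) uu(1) by (simp add: sp_smul_l sp_smul_r)
  moreover have "sp z z = Dual a' b' * Dual a' b'" using zu(2) uu(2) by (simp add: sp_smul_l sp_smul_r)
  ultimately have "Dual a b * Dual a b = Dual a' b' * Dual a' b'" by simp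
  then have e1: "a * a = a' * a'" and e2: "a * b + b * a = a' * b' + b' * a'"
    unfolding dual_eq_iff by (simp_all add: algebra_simps)
  have "(a - a') * (a + a') = 0" using e1 by (simp add: algebra_simps)
  moreover have "a + a' \<noteq> 0" using a by simp
  ultimately have aa: "a = a'" by simp
  then have "a * (2 * (b - b')) = 0" using e2 by (simp add: algebra_simps)
  then have "b = b'" using a by simp
  note ab = aa this
  define c where "c = Dual (1/a) (- b / (a * a))"
  have c1: "c * Dual a b = 1" using a unfolding c_def by (simp add: dual_eq_iff field_simps)
  have "smul c z = u" using zu(1) c1 by simp
  moreover have "smul c z = u'" using zu(2) c1 ab by simp
  ultimately show ?thesis using ab by simp
qed

lemma sliding_rep:
  assumes z: "z \<notin> EM" and sl: "sliding_vector smul sp z"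
  shows "\<exists>a>0. z = rs a (unit_part smul sp z) \<and> sp (unit_part smul sp z) (unit_part smul sp z) = 1"
proof -
  obtain a b u where d: "polar_decomp smul sp z a b u" using polar_ex[OF z] by blast
  have up: "unit_part smul sp z = u" unfolding unit_part_def
    using d polar_uniq[OF d] by blast
  have "pitch smul sp z = b / a" unfolding pitch_def
    using d polar_uniq[OF d] by (intro the_equality) blast+
  then have "b = 0" using sl d by (auto simp: sliding_vector_def polar_decomp_def)
  then show ?thesis using d up by (auto simp: polar_decomp_def rs_def)
qed

lemma dorth_basis:
  assumes f: "dorth f"
  shows "is_dbasis smul f"
proof -
  have fo: "dre (sp (f$i) (f$j)) = (if i = j then 1 else 0)" for i j using f by (simp add: dorth_def)
  have spl: "dre (sp (\<Sum>i\<in>UNIV. rs (l$i) (f$i)) (f$k)) = l$k" for l k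
    by (simp add: sp_sum_l sp_rs_l dre_sum fo) (simp add: sum.delta' if_distrib cong: if_cong)
  have ind: "l = 0" if "(\<Sum>i\<in>UNIV. rs (l$i) (f$i)) \<in> EM" for l :: "real^3"
  proof -
    have "l$k = 0" for k using EM_dre_sp[OF that, of "f$k"] spl by simp
    then show ?thesis by (simp add: vec_eq_iff)
  qed
  show ?thesis unfolding is_dbasis_def
  proof
    fix x
    obtain l where l: "x - (\<Sum>i\<in>UNIV. rs (l$i) (f$i)) \<in> EM" using dim3[OF ind] by blast
    then obtain t where t: "x - (\<Sum>i\<in>UNIV. rs (l$i) (f$i)) = ee t" by (auto simp: EM_iff)
    obtain m where m: "t - (\<Sum>i\<in>UNIV. rs (m$i) (f$i)) \<in> EM" using dim3[OF ind] by blast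
    then obtain t' where t': "t - (\<Sum>i\<in>UNIV. rs (m$i) (f$i)) = ee t'" by (auto simp: EM_iff)
    have "x = (\<Sum>i\<in>UNIV. rs (l$i) (f$i)) + ee t" using t by (simp add: algebra_simps)
    also have "t = (\<Sum>i\<in>UNIV. rs (m$i) (f$i)) + ee t'" using t' by (simp add: algebra_simps)
    finally have "x = (\<Sum>i\<in>UNIV. rs (l$i) (f$i)) + ee (\<Sum>i\<in>UNIV. rs (m$i) (f$i))"
      by (simp add: M.scale_right_distrib)
    also have "\<dots> = (\<Sum>i\<in>UNIV. smul (Dual (l$i) (m$i)) (f$i))"
      by (simp add: smul_Dual M.scale_sum_right sum.distrib)
    finally have ex: "x = (\<Sum>i\<in>UNIV. smul ((\<chi> i. Dual (l$i) (m$i))$i) (f$i))" by simp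
    show "\<exists>!c. x = (\<Sum>i\<in>UNIV. smul (c$i) (f$i))"
    proof (rule ex1I, rule ex)
      fix c assume c: "x = (\<Sum>i\<in>UNIV. smul (c$i) (f$i))"
      define d where "d = c - (\<chi> i. Dual (l$i) (m$i))"
      have "(\<Sum>i\<in>UNIV. smul (d$i) (f$i)) = (\<Sum>i\<in>UNIV. smul (c$i) (f$i)) - (\<Sum>i\<in>UNIV. smul ((\<chi> i. Dual (l$i) (m$i))$i) (f$i))"
        unfolding d_def by (simp add: M.scale_left_diff_distrib sum_subtractf)
      then have d0: "(\<Sum>i\<in>UNIV. smul (d$i) (f$i)) = 0" using c ex by simp
      have e0: "(\<Sum>i\<in>UNIV. d$i * sp (f$i) (f$k)) = 0" for k
        using arg_cong[OF d0, of "\<lambda>y. sp y (f$k)"] by (simp add: sp_sum_l sp_smul_l)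
      have r: "dre (d$k) = 0" for k
        using arg_cong[OF e0[of k], of dre] exhaust_3[of k] by (auto simp: dre_sum sum_3 fo)
      have u: "ddu (d$k) = 0" for k
        using arg_cong[OF e0[of k], of ddu] exhaust_3[of k] by (auto simp: ddu_sum sum_3 fo r)
      have re: "dre (c$k) = l$k" and du: "ddu (c$k) = m$k" for k
        using r[of k] u[of k] by (simp_all add: d_def)
      show "c = (\<chi> i. Dual (l$i) (m$i))" using re du by (simp add: vec_eq_iff dual_eq_iff)
    qed
  qed
qed

end

context dm begin

definition ip :: "'m \<Rightarrow> 'm \<Rightarrow> real" where "ip x y = dre (sp x y)"

lemma ip_sym: "ip x y = ip y x" by (simp add: ip_def sp_sym)
lemma ip_diff_l: "ip (x - y) z = ip x z - ip y z" by (simp add: ip_def sp_diff_l)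
lemma ip_rs_l: "ip (rs a x) z = a * ip x z" by (simp add: ip_def sp_rs_l)
lemma ip_diff_r: "ip z (x - y) = ip z x - ip z y" by (simp add: ip_def sp_diff_r)
lemma ip_rs_r: "ip z (rs a x) = a * ip z x" by (simp add: ip_def sp_rs_r)

lemma rc_b: "rc (b0$i) = ex i"
proof -
  have "coef (b0$i) = (\<chi> j. if j = i then 1 else 0)"
  proof (rule coef_unique)
    show "b0$i = (\<Sum>j\<in>UNIV. smul ((\<chi> j. if j = i then 1 else 0) $ j) (b0$j))"
      using exhaust_3[of i] by (auto simp: sum_3)
  qed
  then show ?thesis by (simp add: rc_def vec_eq_iff Finite_Cartesian_Product.axis_def)
qed

definition nz :: "'m \<Rightarrow> 'm" where "nz x = rs (1 / sqrt (ip x x)) x"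

lemma ip_pos: "x \<notin> EM \<Longrightarrow> ip x x > 0"
  using sp_pos[of x] sp_zero_iff[of x] by (simp add: ip_def less_le)

lemma nz_norm: "x \<notin> EM \<Longrightarrow> ip (nz x) (nz x) = 1"
  using ip_pos[of x] by (simp add: nz_def ip_rs_l ip_rs_r)

lemma notEM: "rc x $ i \<noteq> 0 \<Longrightarrow> x \<notin> EM"
  using rc_zero_iff by force

lemma exists_pos_orth:
  "\<exists>f. is_dbasis smul f \<and> same_orientation smul b0 f \<and> dorth f"
proof -
  define b1 where "b1 = b0$1"
  define b2 where "b2 = b0$2"
  define b3 where "b3 = b0$3"
  define g1 where "g1 = nz b1"
  define h2 where "h2 = b2 - rs (ip b2 g1) g1"
  define g2 where "g2 = nz h2"
  define h3 where "h3 = b3 - rs (ip b3 g1) g1 - rs (ip b3 g2) g2"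
  define g3 where "g3 = nz h3"
  define n1 where "n1 = sqrt (ip b1 b1)"
  define n2 where "n2 = sqrt (ip h2 h2)"
  define n3 where "n3 = sqrt (ip h3 h3)"
  have b1: "b1 \<notin> EM" by (rule notEM[of _ 1]) (simp add: b1_def rc_b)
  have n1: "n1 > 0" using ip_pos[OF b1] by (simp add: n1_def)
  have rg1: "rc g1 = (1/n1) *\<^sub>R ex 1" by (simp add: g1_def nz_def rc_rs b1_def rc_b n1_def)
  have rh2: "rc h2 = ex 2 - (ip b2 g1 / n1) *\<^sub>R ex 1"
    by (simp add: h2_def rc_diff rc_rs rg1 b2_def rc_b)
  have h2: "h2 \<notin> EM" by (rule notEM[of _ 2]) (simp add: rh2 Finite_Cartesian_Product.axis_def)
  have n2: "n2 > 0" using ip_pos[OF h2] by (simp add: n2_def)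
  have rg2: "rc g2 = (1/n2) *\<^sub>R rc h2" by (simp add: g2_def nz_def rc_rs n2_def)
  have rh3: "rc h3 = ex 3 - (ip b3 g1 / n1) *\<^sub>R ex 1 - (ip b3 g2 / n2) *\<^sub>R rc h2"
    by (simp add: h3_def rc_diff rc_rs rg1 rg2 b3_def rc_b)
  have h3: "h3 \<notin> EM" by (rule notEM[of _ 3]) (simp add: rh3 rh2 Finite_Cartesian_Product.axis_def)
  have n3: "n3 > 0" using ip_pos[OF h3] by (simp add: n3_def)
  have rg3: "rc g3 = (1/n3) *\<^sub>R rc h3" by (simp add: g3_def nz_def rc_rs n3_def)
  have o11: "ip g1 g1 = 1" using nz_norm[OF b1] by (simp add: g1_def)
  have o22: "ip g2 g2 = 1" using nz_norm[OF h2] by (simp add: g2_def)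
  have o33: "ip g3 g3 = 1" using nz_norm[OF h3] by (simp add: g3_def)
  have o21: "ip g2 g1 = 0"
    by (simp add: g2_def nz_def ip_rs_l h2_def ip_diff_l o11)
  have o31: "ip g3 g1 = 0"
    by (simp add: g3_def nz_def ip_rs_l h3_def ip_diff_l o11 o21)
  have o32: "ip g3 g2 = 0"
    by (simp add: g3_def nz_def ip_rs_l h3_def ip_diff_l o22 ip_sym[of g1 g2] o21)
  define g :: "'m^3" where "g = vector [g1, g2, g3]"
  have o12: "ip g1 g2 = 0" and o13: "ip g1 g3 = 0" and o23: "ip g2 g3 = 0"
    using o21 o31 o32 ip_sym by metis+
  have dg: "dorth g"
    unfolding dorth_def ip_def[symmetric] forall_3
    by (simp add: g_def o11 o22 o33 o21 o31 o32 o12 o13 o23)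
  have so: "same_orientation smul b0 g"
    unfolding same_orientation_def
  proof (intro exI conjI allI)
    show "g$j = (\<Sum>k\<in>UNIV. smul ((\<chi> j k. coef (g$j) $ k) $ j $ k) (b0$k))" for j
      using coef_rep[of "g$j"] by simp
    have "(\<chi> j k. dre ((\<chi> j k. coef (g$j) $ k) $ j $ k)) = (\<chi> j k. rc (g$j) $ k)"
      by (simp add: rc_def)
    moreover have "det (\<chi> j k. rc (g$j) $ k) = (1/n1) * (1/n2) * (1/n3)"
      by (simp add: det_3 g_def rg1 rg2 rg3 rh2 rh3 Finite_Cartesian_Product.axis_def)
    ultimately show "det (\<chi> j k. dre ((\<chi> j k. coef (g$j) $ k) $ j $ k)) > 0"
      using n1 n2 n3 by simp
  qed
  show ?thesis using dorth_basis[OF dg] so dg by blast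
qed

end

lemma cross_id1: "cross3 v (cross3 x v) = (v \<bullet> v) *\<^sub>R x - (v \<bullet> x) *\<^sub>R v"
  by (simp add: cross3_simps forall_3)
lemma cross_id2: "cross3 n (cross3 v D) = (n \<bullet> D) *\<^sub>R v - (n \<bullet> v) *\<^sub>R D"
  by (simp add: cross3_simps forall_3)
lemma cross_id3: "n \<bullet> cross3 v D = D \<bullet> cross3 n v"
  by (simp add: cross3_simps forall_3)
lemma cross_mult_r: "cross3 x (c *\<^sub>R y) = c *\<^sub>R cross3 x y"
  by (simp add: cross3_simps forall_3)
lemma cross_mult_l: "cross3 (c *\<^sub>R x) y = c *\<^sub>R cross3 x y"
  by (simp add: cross3_simps forall_3)
lemma cross_add_l: "cross3 (x + z) y = cross3 x y + cross3 z y"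
  by (simp add: cross3_simps forall_3)
lemma cross_diff_l: "cross3 (x - z) y = cross3 x y - cross3 z y"
  by (simp add: cross3_simps forall_3)
lemma cross_self: "cross3 x x = 0"
  by (simp add: cross3_simps forall_3)

lemma cross_parallel:
  assumes "cross3 x v = 0" "v \<noteq> 0"
  shows "x = ((v \<bullet> x) / (v \<bullet> v)) *\<^sub>R v"
proof -
  have h: "(v \<bullet> v) *\<^sub>R x = (v \<bullet> x) *\<^sub>R v" using cross_id1[of v x] assms by simp
  have nz: "v \<bullet> v \<noteq> 0" using assms by simp
  have "x = (1/(v \<bullet> v)) *\<^sub>R ((v \<bullet> v) *\<^sub>R x)" using nz by simp
  also have "\<dots> = (1/(v \<bullet> v)) *\<^sub>R ((v \<bullet> x) *\<^sub>R v)" using h by simp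
  also have "\<dots> = ((v \<bullet> x) / (v \<bullet> v)) *\<^sub>R v" by simp
  finally show ?thesis .
qed

lemma cross_solve:
  assumes "v \<noteq> 0" "w \<bullet> v = 0"
  shows "cross3 ((1/(v \<bullet> v)) *\<^sub>R cross3 v w) v = w"
proof -
  have "cross3 (cross3 v w) v = (v \<bullet> v) *\<^sub>R w - (w \<bullet> v) *\<^sub>R v"
    by (simp add: cross3_simps forall_3)
  then have "cross3 (cross3 v w) v = (v \<bullet> v) *\<^sub>R w" using assms(2) by simp
  moreover have "v \<bullet> v \<noteq> 0" using assms by simp
  ultimately show ?thesis by (simp add: cross_mult_l)
qed

lemma cross_zero_crit:
  assumes "n \<noteq> 0" "n \<bullet> v = 0" "n \<bullet> D = 0" "D \<bullet> cross3 n v = 0"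
  shows "cross3 D v = 0"
proof -
  define x where "x = cross3 v D"
  have 1: "cross3 n x = 0" using cross_id2[of n v D] assms by (simp add: x_def)
  have 2: "n \<bullet> x = 0" using cross_id3[of n v D] assms by (simp add: x_def)
  have "(norm n * norm x)\<^sup>2 = 0" using norm_cross_dot[of n x] 1 2 by simp
  then have "x = 0" using assms(1) by simp
  moreover have "cross3 D v = - x" unfolding x_def by (simp add: cross3_simps forall_3)
  ultimately show ?thesis by simp
qed

lemma RL1:
  fixes v v1 v2 v3 w1 w2 w3 :: "real^3" and s1 s2 s3 :: real and W :: "(real^3) set"
  assumes v: "v \<noteq> 0" and s: "s1 \<noteq> 0" "s2 \<noteq> 0" "s3 \<noteq> 0"
    and vi: "v1 = s1 *\<^sub>R v" "v2 = s2 *\<^sub>R v" "v3 = s3 *\<^sub>R v"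
    and wi: "w1 \<bullet> v = 0" "w2 \<bullet> v = 0" "w3 \<bullet> v = 0"
    and W: "subspace W" "dim W = 2"
    and h1: "\<And>d. cross3 d v1 = w1 \<Longrightarrow> d \<in> W"
    and h2: "\<And>d. cross3 d v2 = w2 \<Longrightarrow> d \<in> W"
    and h3: "\<And>d. cross3 d v3 = w3 \<Longrightarrow> d \<in> W"
  shows "\<exists>l1 l2 l3. (l1, l2, l3) \<noteq> (0, 0, 0) \<and> l1 *\<^sub>R v1 + l2 *\<^sub>R v2 + l3 *\<^sub>R v3 = 0
      \<and> l1 *\<^sub>R w1 + l2 *\<^sub>R w2 + l3 *\<^sub>R w3 = 0"
proof -
  define D where "D w s = (1/s) *\<^sub>R ((1/(v \<bullet> v)) *\<^sub>R cross3 v w)" for w s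
  have Dsol: "cross3 (D w s) (s *\<^sub>R v) = w" if "w \<bullet> v = 0" "s \<noteq> 0" for w s
    using cross_solve[OF v that(1)] that(2) unfolding D_def
    by (simp add: cross_mult_l cross_mult_r)
  have DW: "D w1 s1 \<in> W" "D w2 s2 \<in> W" "D w3 s3 \<in> W"
    using h1 h2 h3 Dsol wi s vi by auto
  have "cross3 (D w1 s1 + v1) v1 = w1"
    using Dsol[OF wi(1) s(1)] vi by (simp add: cross_add_l cross_self)
  then have "D w1 s1 + v1 \<in> W" using h1 by blast
  then have "v1 \<in> W" using DW W(1) by (metis add_diff_cancel_left' subspace_diff)
  then have vW: "v \<in> W" using vi s W(1) subspace_scale[OF W(1) \<open>v1 \<in> W\<close>, of "1/s1"] by simp
  have "dim W < DIM(real^3)" using W by simp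
  then obtain n where n: "n \<noteq> 0" "\<And>y. y \<in> span W \<Longrightarrow> orthogonal n y"
    using orthogonal_to_subspace_exists by blast
  have nW: "n \<bullet> y = 0" if "y \<in> W" for y using n(2)[of y] span_base[OF that] by (simp add: orthogonal_def)
  define m where "m = cross3 n v"
  define b1 where "b1 = m \<bullet> D w1 s1"
  define b2 where "b2 = m \<bullet> D w2 s2"
  define b3 where "b3 = m \<bullet> D w3 s3"
  obtain m1 m2 m3 where mu: "(m1, m2, m3) \<noteq> (0,0,0)" "m1 + m2 + m3 = 0" "m1 * b1 + m2 * b2 + m3 * b3 = 0"
  proof (cases "b1 = b2")
    case True
    show ?thesis by (rule that[of 1 "-1" 0]) (use True in auto)
  next
    case False
    show ?thesis by (rule that[of "b2 - b3" "b3 - b1" "b1 - b2"]) (use False in \<open>auto simp: algebra_simps\<close>)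
  qed
  define Ds where "Ds = m1 *\<^sub>R D w1 s1 + m2 *\<^sub>R D w2 s2 + m3 *\<^sub>R D w3 s3"
  have "Ds \<in> W" unfolding Ds_def using DW W(1)
    by (intro subspace_add subspace_scale) auto
  then have "n \<bullet> Ds = 0" by (rule nW)
  moreover have "Ds \<bullet> m = 0" using mu(3) unfolding Ds_def b1_def b2_def b3_def
    by (simp add: inner_add_left inner_add_right inner_commute)
  moreover have "n \<bullet> v = 0" using nW vW by blast
  ultimately have cz: "cross3 Ds v = 0" using cross_zero_crit[OF n(1)] m_def by blast
  have e: "cross3 (D w s) v = (1/s) *\<^sub>R w" if "w \<bullet> v = 0" "s \<noteq> 0" for w s
  proof -
    have "s *\<^sub>R cross3 (D w s) v = w" using Dsol[OF that] by (simp add: cross_mult_r)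
    then have "(1/s) *\<^sub>R (s *\<^sub>R cross3 (D w s) v) = (1/s) *\<^sub>R w" by simp
    then show ?thesis using that(2) by simp
  qed
  show ?thesis
  proof (intro exI conjI)
    show "(m1/s1, m2/s2, m3/s3) \<noteq> (0,0,0)" using mu(1) s by auto
    show "(m1/s1) *\<^sub>R v1 + (m2/s2) *\<^sub>R v2 + (m3/s3) *\<^sub>R v3 = 0"
      using vi s mu(2) by (simp add: scaleR_left_distrib[symmetric])
    have "cross3 Ds v = m1 *\<^sub>R (1/s1) *\<^sub>R w1 + m2 *\<^sub>R (1/s2) *\<^sub>R w2 + m3 *\<^sub>R (1/s3) *\<^sub>R w3"
      unfolding Ds_def using e wi s by (simp add: cross_add_l cross_mult_l)
    then show "(m1/s1) *\<^sub>R w1 + (m2/s2) *\<^sub>R w2 + (m3/s3) *\<^sub>R w3 = 0"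
      using cz by simp
  qed
qed

lemma RL2:
  fixes v v1 v2 v3 w1 w2 w3 :: "real^3" and s1 s2 s3 l1 l2 l3 :: real
  assumes v: "v \<noteq> 0" and s: "s1 \<noteq> 0" "s2 \<noteq> 0" "s3 \<noteq> 0"
    and vi: "v1 = s1 *\<^sub>R v" "v2 = s2 *\<^sub>R v" "v3 = s3 *\<^sub>R v"
    and wi: "w1 = 0" "w2 \<bullet> v = 0" "w3 \<bullet> v = 0"
    and l: "(l1, l2, l3) \<noteq> (0, 0, 0)" "l1 *\<^sub>R v1 + l2 *\<^sub>R v2 + l3 *\<^sub>R v3 = 0"
      "l1 *\<^sub>R w1 + l2 *\<^sub>R w2 + l3 *\<^sub>R w3 = 0"
  shows "\<exists>W. subspace W \<and> dim W = 2 \<and> (\<forall>d. cross3 d v1 = w1 \<longrightarrow> d \<in> W)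
     \<and> (\<forall>d. cross3 d v2 = w2 \<longrightarrow> d \<in> W) \<and> (\<forall>d. cross3 d v3 = w3 \<longrightarrow> d \<in> W)"
proof -
  define D where "D w s = (1/s) *\<^sub>R ((1/(v \<bullet> v)) *\<^sub>R cross3 v w)" for w s
  have Dsol: "cross3 (D w s) (s *\<^sub>R v) = w" if "w \<bullet> v = 0" "s \<noteq> 0" for w s
    using cross_solve[OF v that(1)] that(2) unfolding D_def
    by (simp add: cross_mult_l cross_mult_r)
  have e: "cross3 (D w s) v = (1/s) *\<^sub>R w" if "w \<bullet> v = 0" "s \<noteq> 0" for w s
  proof -
    have "s *\<^sub>R cross3 (D w s) v = w" using Dsol[OF that] by (simp add: cross_mult_r)
    then have "(1/s) *\<^sub>R (s *\<^sub>R cross3 (D w s) v) = (1/s) *\<^sub>R w" by simp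
    then show ?thesis using that(2) by simp
  qed
  have D1: "D w1 s1 = 0" using wi unfolding D_def by simp
  define m1 where "m1 = l1 * s1"
  define m2 where "m2 = l2 * s2"
  define m3 where "m3 = l3 * s3"
  have "(m1 + m2 + m3) *\<^sub>R v = 0" using l(2) vi unfolding m1_def m2_def m3_def
    by (simp add: scaleR_left_distrib)
  then have msum: "m1 + m2 + m3 = 0" using v by simp
  have mnz: "(m2, m3) \<noteq> (0, 0)"
  proof
    assume "(m2, m3) = (0, 0)"
    then have "m1 = 0" "m2 = 0" "m3 = 0" using msum by auto
    then show False using l(1) s unfolding m1_def m2_def m3_def by auto
  qed
  define Ds where "Ds = m2 *\<^sub>R D w2 s2 + m3 *\<^sub>R D w3 s3"
  have "cross3 Ds v = l2 *\<^sub>R w2 + l3 *\<^sub>R w3"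
    unfolding Ds_def m2_def m3_def using e wi s by (simp add: cross_add_l cross_mult_l)
  also have "\<dots> = 0" using l(3) wi by simp
  finally have "cross3 Ds v = 0" .
  then have Dsv: "Ds \<in> span {v}" using cross_parallel[OF _ v] by (metis span_base span_scale singletonI)
  have "dim {v, D w2 s2, D w3 s3} \<le> 2"
  proof (cases "m3 = 0")
    case True
    then have "m2 \<noteq> 0" using mnz by auto
    have "D w2 s2 = (1/m2) *\<^sub>R Ds" using True \<open>m2 \<noteq> 0\<close> unfolding Ds_def by simp
    then have "D w2 s2 \<in> span {v, D w3 s3}"
      using Dsv span_mono[of "{v}" "{v, D w3 s3}"] by (metis insert_mono empty_subsetI in_mono span_scale)
    then have "{v, D w2 s2, D w3 s3} \<subseteq> span {v, D w3 s3}" by (auto intro: span_base)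
    then have "dim {v, D w2 s2, D w3 s3} \<le> card {v, D w3 s3}" by (rule dim_le_card) simp
    also have "\<dots> \<le> 2" by (simp add: card_insert_le_m1)
    finally show ?thesis .
  next
    case False
    have "D w3 s3 = (1/m3) *\<^sub>R Ds - (m2/m3) *\<^sub>R D w2 s2" using False unfolding Ds_def
      by (simp add: algebra_simps)
    then have "D w3 s3 \<in> span {v, D w2 s2}"
      using Dsv span_mono[of "{v}" "{v, D w2 s2}"]
      by (metis (no_types, lifting) insert_commute insert_subset span_base span_diff span_scale subset_insertI in_mono)
    then have "{v, D w2 s2, D w3 s3} \<subseteq> span {v, D w2 s2}" by (auto intro: span_base)
    then have "dim {v, D w2 s2, D w3 s3} \<le> card {v, D w2 s2}" by (rule dim_le_card) simp
    also have "\<dots> \<le> 2" by (simp add: card_insert_le_m1)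
    finally show ?thesis .
  qed
  then have "dim {v, D w2 s2, D w3 s3} < DIM(real^3)" by simp
  then obtain n where n: "n \<noteq> 0" "\<And>y. y \<in> span {v, D w2 s2, D w3 s3} \<Longrightarrow> orthogonal n y"
    using orthogonal_to_subspace_exists by blast
  have nv: "n \<bullet> v = 0" "n \<bullet> D w2 s2 = 0" "n \<bullet> D w3 s3 = 0"
    using n(2) by (auto simp: orthogonal_def intro: span_base)
  have nD1: "n \<bullet> D w1 s1 = 0" using D1 by simp
  have key: "n \<bullet> d = 0" if "cross3 d (s *\<^sub>R v) = w" "w \<bullet> v = 0" "s \<noteq> 0" "n \<bullet> D w s = 0" for d w s
  proof -
    have "cross3 (d - D w s) (s *\<^sub>R v) = 0" using that Dsol by (simp add: cross_diff_l)
    then have "cross3 (d - D w s) v = 0" using that(3) by (simp add: cross_mult_r)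
    then have "d - D w s = ((v \<bullet> (d - D w s)) / (v \<bullet> v)) *\<^sub>R v" by (rule cross_parallel[OF _ v])
    then have "n \<bullet> (d - D w s) = 0" using nv(1) by (metis inner_scaleR_right mult_zero_right)
    then show ?thesis using that(4) by (simp add: inner_diff_right)
  qed
  show ?thesis
  proof (intro exI[of _ "{x. n \<bullet> x = 0}"] conjI allI impI)
    show "subspace {x. n \<bullet> x = 0}" by (rule subspace_hyperplane)
    show "dim {x. n \<bullet> x = 0} = 2" using dim_hyperplane[OF n(1)] by simp
    show "d \<in> {x. n \<bullet> x = 0}" if "cross3 d v1 = w1" for d
      using key[of d s1 w1] that vi wi s nD1 by (simp add: inner_commute)
    show "d \<in> {x. n \<bullet> x = 0}" if "cross3 d v2 = w2" for d
      using key[of d s2 w2] that vi wi s nv by simp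
    show "d \<in> {x. n \<bullet> x = 0}" if "cross3 d v3 = w3" for d
      using key[of d s3 w3] that vi wi s nv by simp
  qed
qed


context dm begin

lemma onb_exists:
  assumes f: "dorth f"
  shows "\<exists>a::'m^3. \<forall>i j. sp (a$i) (a$j) = (if i = j then 1 else 0)"
proof -
  have fo: "dre (sp (f$i) (f$j)) = (if i = j then 1 else 0)" for i j using f by (simp add: dorth_def)
  define S where "S i k = ddu (sp (f$i) (f$k))" for i k
  define Y where "Y i = (\<Sum>k\<in>UNIV. rs (S i k) (f$k))" for i
  define a :: "'m^3" where "a = (\<chi> i. f$i - rs (1/2) (ee (Y i)))"
  have dY2: "dre (sp (Y i) (f$j)) = S i j" for i j
    using exhaust_3[of j] by (auto simp: Y_def sum_3 sp_add_l sp_rs_l fo S_def)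
  have Ssym: "S i j = S j i" for i j by (simp add: S_def sp_sym)
  have dY1: "dre (sp (f$i) (Y j)) = S i j" for i j
    using dY2[of j i] Ssym sp_sym by metis
  show ?thesis
  proof (intro exI allI)
    fix i j
    have "a$i - f$i \<in> EM" "a$j - f$j \<in> EM" by (auto simp: a_def intro!: EM_minus EM_rs)
    then have re: "dre (sp (a$i) (a$j)) = (if i = j then 1 else 0)"
      using dre_sp_EM_shift fo by metis
    have du: "ddu (sp (a$i) (a$j)) = 0"
      by (simp add: a_def sp_diff_l sp_diff_r sp_rs_l sp_rs_r sp_ee_l sp_ee_r dY1 dY2)
         (simp add: S_def)
    show "sp (a$i) (a$j) = (if i = j then 1 else 0)" using re du by (simp add: dual_eq_iff)
  qed
qed

end

context onbl begin

lemma unit_coords: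
  assumes "sp u u = 1"
  shows "re u \<bullet> re u = 1" "du u \<bullet> re u = 0"
proof -
  have "Dual (re u \<bullet> re u) (re u \<bullet> du u + du u \<bullet> re u) = 1" using assms sp_coords by metis
  then have "re u \<bullet> re u = 1" "re u \<bullet> du u + du u \<bullet> re u = 0" by (simp_all add: dual_eq_iff)
  then show "re u \<bullet> re u = 1" "du u \<bullet> re u = 0" by (simp_all add: inner_commute)
qed

lemma par_coords:
  assumes "x - rs c y \<in> EM"
  shows "re x = c *\<^sub>R re y"
  using assms by (simp add: EM_re re_diff re_rs)

lemma setup_coords:
  assumes u: "sp u1 u1 = 1" "sp u2 u2 = 1" "sp u3 u3 = 1"
    and p: "u1 - rs c12 u2 \<in> EM" "u2 - rs c23 u3 \<in> EM"
  shows "re u2 \<noteq> 0 \<and> c12 \<noteq> 0 \<and> c23 \<noteq> 0 \<and> re u1 = c12 *\<^sub>R re u2 \<and> re u3 = (1/c23) *\<^sub>R re u2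
    \<and> du u1 \<bullet> re u2 = 0 \<and> du u2 \<bullet> re u2 = 0 \<and> du u3 \<bullet> re u2 = 0"
proof -
  have r1: "re u1 = c12 *\<^sub>R re u2" and r2: "re u2 = c23 *\<^sub>R re u3" using par_coords p by auto
  have n: "re u1 \<bullet> re u1 = 1" "re u2 \<bullet> re u2 = 1" "re u3 \<bullet> re u3 = 1" using unit_coords u by auto
  have o: "du u1 \<bullet> re u1 = 0" "du u2 \<bullet> re u2 = 0" "du u3 \<bullet> re u3 = 0" using unit_coords u by auto
  have v: "re u2 \<noteq> 0" using n by auto
  have c12: "c12 \<noteq> 0" using n(1) r1 by auto
  have c23: "c23 \<noteq> 0" using v r2 by auto
  have r3: "re u3 = (1/c23) *\<^sub>R re u2" using r2 c23 by simp
  have "c12 * (du u1 \<bullet> re u2) = 0" using o(1) r1 by simp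
  then have o1: "du u1 \<bullet> re u2 = 0" using c12 by simp
  have "(1/c23) * (du u3 \<bullet> re u2) = 0" using o(3) r3 by simp
  then have o3: "du u3 \<bullet> re u2 = 0" using c23 by simp
  show ?thesis using v c12 c23 r1 r3 o1 o(2) o3 by blast
qed

lemma dep_coords:
  "rs c1 (rs a1 u1) + rs c2 (rs a2 u2) + rs c3 (rs a3 u3) = 0 \<longleftrightarrow>
    (c1 * a1) *\<^sub>R re u1 + (c2 * a2) *\<^sub>R re u2 + (c3 * a3) *\<^sub>R re u3 = 0 \<and>
    (c1 * a1) *\<^sub>R du u1 + (c2 * a2) *\<^sub>R du u2 + (c3 * a3) *\<^sub>R du u3 = 0"
  by (simp add: eq_iff re_add re_rs du_add du_rs)

end

theorem proposition17:
  fixes smul :: "dual \<Rightarrow> 'm::ab_group_add \<Rightarrow> 'm"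
    and sp :: "'m \<Rightarrow> 'm \<Rightarrow> dual"
    and OR :: "('m^3) set"
    and z1 z2 z3 :: 'm
  assumes "dmod_sp_or smul sp OR"
    and "z1 \<notin> epsM smul" "z2 \<notin> epsM smul" "z3 \<notin> epsM smul"
    and "sliding_vector smul sp z1" "sliding_vector smul sp z2" "sliding_vector smul sp z3"
    and "parallel_axes smul sp z1 z2" "parallel_axes smul sp z2 z3" "parallel_axes smul sp z1 z3"
  shows "(\<exists>c1 c2 c3::real. (c1, c2, c3) \<noteq> (0, 0, 0) \<and>
            rscale smul c1 z1 + rscale smul c2 z2 + rscale smul c3 z3 = 0)
         \<longleftrightarrow> coplanar_in_E smul sp OR {axis smul sp z1, axis smul sp z2, axis smul sp z3}"
proof -
  from assms(1) have Mod: "module smul" and SPr: "is_scalar_product smul sp"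
    and Or: "is_orientation smul OR" by (auto simp: dmod_sp_or_def)
  from Or obtain b0 where b0: "is_dbasis smul b0"
    and ORd: "OR = {b'. is_dbasis smul b' \<and> same_orientation smul b0 b'}"
    by (auto simp: is_orientation_def)
  interpret dm smul sp b0 using Mod SPr b0 by (rule dm.intro)
  define u1 where "u1 = unit_part smul sp z1"
  define u2 where "u2 = unit_part smul sp z2"
  define u3 where "u3 = unit_part smul sp z3"
  obtain a1 where a1: "a1 > 0" "z1 = rs a1 u1" "sp u1 u1 = 1"
    using sliding_rep[OF assms(2) assms(5)] unfolding u1_def by blast
  obtain a2 where a2: "a2 > 0" "z2 = rs a2 u2" "sp u2 u2 = 1"
    using sliding_rep[OF assms(3) assms(6)] unfolding u2_def by blast
  obtain a3 where a3: "a3 > 0" "z3 = rs a3 u3" "sp u3 u3 = 1"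
    using sliding_rep[OF assms(4) assms(7)] unfolding u3_def by blast
  obtain c12 where p12: "u1 - rs c12 u2 \<in> EM"
    using assms(8) unfolding parallel_axes_def u1_def u2_def by blast
  obtain c23 where p23: "u2 - rs c23 u3 \<in> EM"
    using assms(9) unfolding parallel_axes_def u2_def u3_def by blast
  have axis_iff: "P \<in> axis smul sp z1 \<longleftrightarrow> P \<in> Espace smul sp \<and> u1 \<in> P"
    "P \<in> axis smul sp z2 \<longleftrightarrow> P \<in> Espace smul sp \<and> u2 \<in> P"
    "P \<in> axis smul sp z3 \<longleftrightarrow> P \<in> Espace smul sp \<and> u3 \<in> P" for P
    by (auto simp: axis_def u1_def u2_def u3_def)
  have lnz: "(c1 * a1, c2 * a2, c3 * a3) \<noteq> (0, 0, 0) \<longleftrightarrow> (c1, c2, c3) \<noteq> (0, 0, 0)" for c1 c2 c3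
    using a1(1) a2(1) a3(1) by auto
  show ?thesis
  proof
    assume "\<exists>c1 c2 c3::real. (c1, c2, c3) \<noteq> (0, 0, 0) \<and> rs c1 z1 + rs c2 z2 + rs c3 z3 = 0"
    then obtain c1 c2 c3 where c: "(c1, c2, c3) \<noteq> (0, 0, 0)" "rs c1 z1 + rs c2 z2 + rs c3 z3 = 0"
      by blast
    obtain f where f: "is_dbasis smul f" "same_orientation smul b0 f" "dorth f"
      using exists_pos_orth by blast
    have fOR: "f \<in> OR" using f ORd by simp
    obtain a0 :: "'m^3" where a0: "\<And>i j. sp (a0$i) (a0$j) = (if i = j then 1 else 0)"
      using onb_exists[OF f(3)] by blast
    interpret O0: onbl smul sp b0 a0 by unfold_locales (rule a0)
    have v0: "O0.re u1 \<bullet> O0.re u1 = 1" "O0.du u1 \<bullet> O0.re u1 = 0" using O0.unit_coords[OF a1(3)] by auto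
    then have v0nz: "O0.re u1 \<noteq> 0" by auto
    define D1 where "D1 = (1/(O0.re u1 \<bullet> O0.re u1)) *\<^sub>R cross3 (O0.re u1) (O0.du u1)"
    have D1: "cross3 D1 (O0.re u1) = O0.du u1" unfolding D1_def by (rule cross_solve[OF v0nz v0(2)])
    define A where "A = O0.PD D1"
    have AE: "A \<in> Espace smul sp" unfolding A_def by (rule O0.PD_E)
    have u1A: "u1 \<in> A" unfolding A_def O0.PD_def using D1 by simp
    define a :: "'m^3" where "a = (\<chi> i. lift_to smul A (f$i))"
    have onba: "sp (a$i) (a$j) = (if i = j then 1 else 0)" for i j
      using onb_lift[OF f(3) AE] unfolding onb_def a_def by blast
    interpret O: onbA smul sp b0 a f A
      by unfold_locales (fact onba | fact AE | simp add: a_def)+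
    have sc: "O.re u2 \<noteq> 0 \<and> c12 \<noteq> 0 \<and> c23 \<noteq> 0 \<and> O.re u1 = c12 *\<^sub>R O.re u2 \<and> O.re u3 = (1/c23) *\<^sub>R O.re u2
      \<and> O.du u1 \<bullet> O.re u2 = 0 \<and> O.du u2 \<bullet> O.re u2 = 0 \<and> O.du u3 \<bullet> O.re u2 = 0"
      by (rule O.setup_coords[OF a1(3) a2(3) a3(3) p12 p23])
    have w1: "O.du u1 = 0" using O.A_du[OF u1A] .
    have dep: "(c1 * a1) *\<^sub>R O.re u1 + (c2 * a2) *\<^sub>R O.re u2 + (c3 * a3) *\<^sub>R O.re u3 = 0 \<and>
      (c1 * a1) *\<^sub>R O.du u1 + (c2 * a2) *\<^sub>R O.du u2 + (c3 * a3) *\<^sub>R O.du u3 = 0"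
      using c(2) O.dep_coords[of c1 a1 u1 c2 a2 u2 c3 a3 u3] a1(2) a2(2) a3(2) by simp
    have "\<exists>W. subspace W \<and> dim W = 2 \<and> (\<forall>d. cross3 d (O.re u1) = O.du u1 \<longrightarrow> d \<in> W)
     \<and> (\<forall>d. cross3 d (O.re u2) = O.du u2 \<longrightarrow> d \<in> W) \<and> (\<forall>d. cross3 d (O.re u3) = O.du u3 \<longrightarrow> d \<in> W)"
    proof (rule RL2[of "O.re u2" c12 1 "1/c23" _ _ _ _ _ _ "c1 * a1" "c2 * a2" "c3 * a3"])
      show "O.re u2 \<noteq> 0" "c12 \<noteq> 0" "(1::real) \<noteq> 0" "1/c23 \<noteq> 0" using sc by auto
      show "O.re u1 = c12 *\<^sub>R O.re u2" "O.re u2 = 1 *\<^sub>R O.re u2" "O.re u3 = (1/c23) *\<^sub>R O.re u2"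
        using sc by auto
      show "O.du u1 = 0" "O.du u2 \<bullet> O.re u2 = 0" "O.du u3 \<bullet> O.re u2 = 0" using sc w1 by auto
      show "(c1 * a1, c2 * a2, c3 * a3) \<noteq> (0, 0, 0)" using lnz c(1) by blast
    qed (use dep in auto)
    then obtain W where W: "subspace W" "dim W = 2"
      "\<And>d. cross3 d (O.re u1) = O.du u1 \<Longrightarrow> d \<in> W"
      "\<And>d. cross3 d (O.re u2) = O.du u2 \<Longrightarrow> d \<in> W"
      "\<And>d. cross3 d (O.re u3) = O.du u3 \<Longrightarrow> d \<in> W" by blast
    have inW: "Ediff smul f P A \<in> W" if P: "P \<in> Espace smul sp" and u: "u \<in> P"
      and hW: "\<And>d. cross3 d (O.re u) = O.du u \<Longrightarrow> d \<in> W" for P u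
    proof -
      obtain D where D: "\<forall>x\<in>P. O.du x = cross3 D (O.re x)" using O.ExistsD[OF P] by blast
      have "Ediff smul f P A = D" by (rule O.EdiffChar[OF P D])
      moreover have "D \<in> W" using hW D u by metis
      ultimately show ?thesis by simp
    qed
    show "coplanar_in_E smul sp OR {axis smul sp z1, axis smul sp z2, axis smul sp z3}"
      unfolding coplanar_in_E_def
    proof (intro exI conjI bexI)
      show "pos_orthonormal_V smul sp OR f" using fOR f(3) by (simp add: pos_orthonormal_V_def dorth_def)
      show "A \<in> Espace smul sp" by (rule AE)
      show "subspace W" "dim W = 2" by (rule W(1), rule W(2))
      show "\<forall>L\<in>{axis smul sp z1, axis smul sp z2, axis smul sp z3}. \<forall>P\<in>L. Ediff smul f P A \<in> W"
        using inW W(3,4,5) axis_iff by auto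
    qed
  next
    assume "coplanar_in_E smul sp OR {axis smul sp z1, axis smul sp z2, axis smul sp z3}"
    then obtain f A W where f: "pos_orthonormal_V smul sp OR f" and AE: "A \<in> Espace smul sp"
      and W: "subspace W" "dim W = 2"
      and hW: "\<forall>L\<in>{axis smul sp z1, axis smul sp z2, axis smul sp z3}. \<forall>P\<in>L. Ediff smul f P A \<in> W"
      unfolding coplanar_in_E_def by blast
    have df: "dorth f" using f by (simp add: pos_orthonormal_V_def dorth_def)
    define a :: "'m^3" where "a = (\<chi> i. lift_to smul A (f$i))"
    have onba: "sp (a$i) (a$j) = (if i = j then 1 else 0)" for i j
      using onb_lift[OF df AE] unfolding onb_def a_def by blast
    interpret O: onbA smul sp b0 a f A
      by unfold_locales (fact onba | fact AE | simp add: a_def)+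
    have sc: "O.re u2 \<noteq> 0 \<and> c12 \<noteq> 0 \<and> c23 \<noteq> 0 \<and> O.re u1 = c12 *\<^sub>R O.re u2 \<and> O.re u3 = (1/c23) *\<^sub>R O.re u2
      \<and> O.du u1 \<bullet> O.re u2 = 0 \<and> O.du u2 \<bullet> O.re u2 = 0 \<and> O.du u3 \<bullet> O.re u2 = 0"
      by (rule O.setup_coords[OF a1(3) a2(3) a3(3) p12 p23])
    have key: "d \<in> W" if "cross3 d (O.re u) = O.du u" and L: "L \<in> {axis smul sp z1, axis smul sp z2, axis smul sp z3}"
      and ax: "\<And>P. P \<in> L \<longleftrightarrow> P \<in> Espace smul sp \<and> u \<in> P" for d u L
    proof -
      have PE: "O.PD d \<in> Espace smul sp" by (rule O.PD_E)
      have "u \<in> O.PD d" unfolding O.PD_def using that(1) by simp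
      then have "O.PD d \<in> L" using ax PE by blast
      then have "Ediff smul f (O.PD d) A \<in> W" using hW L by blast
      moreover have "Ediff smul f (O.PD d) A = d" by (rule O.EdiffChar[OF PE]) (simp add: O.PD_def)
      ultimately show ?thesis by simp
    qed
    obtain l1 l2 l3 where l: "(l1, l2, l3) \<noteq> (0, 0, 0)"
      "l1 *\<^sub>R O.re u1 + l2 *\<^sub>R O.re u2 + l3 *\<^sub>R O.re u3 = 0"
      "l1 *\<^sub>R O.du u1 + l2 *\<^sub>R O.du u2 + l3 *\<^sub>R O.du u3 = 0"
    proof -
      have "\<exists>l1 l2 l3. (l1, l2, l3) \<noteq> (0, 0, 0) \<and> l1 *\<^sub>R O.re u1 + l2 *\<^sub>R O.re u2 + l3 *\<^sub>R O.re u3 = 0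
        \<and> l1 *\<^sub>R O.du u1 + l2 *\<^sub>R O.du u2 + l3 *\<^sub>R O.du u3 = 0"
      proof (rule RL1[of "O.re u2" c12 1 "1/c23"])
        show "O.re u2 \<noteq> 0" "c12 \<noteq> 0" "(1::real) \<noteq> 0" "1/c23 \<noteq> 0" using sc by auto
        show "O.re u1 = c12 *\<^sub>R O.re u2" "O.re u2 = 1 *\<^sub>R O.re u2" "O.re u3 = (1/c23) *\<^sub>R O.re u2"
          using sc by auto
        show "O.du u1 \<bullet> O.re u2 = 0" "O.du u2 \<bullet> O.re u2 = 0" "O.du u3 \<bullet> O.re u2 = 0" using sc by auto
        show "subspace W" "dim W = 2" by (rule W(1), rule W(2))
        show "d \<in> W" if "cross3 d (O.re u1) = O.du u1" for d
          using key[OF that _ axis_iff(1)] by blast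
        show "d \<in> W" if "cross3 d (O.re u2) = O.du u2" for d
          using key[OF that _ axis_iff(2)] by blast
        show "d \<in> W" if "cross3 d (O.re u3) = O.du u3" for d
          using key[OF that _ axis_iff(3)] by blast
      qed
      then show ?thesis using that by blast
    qed
    show "\<exists>c1 c2 c3::real. (c1, c2, c3) \<noteq> (0, 0, 0) \<and> rs c1 z1 + rs c2 z2 + rs c3 z3 = 0"
    proof (intro exI conjI)
      show "(l1/a1, l2/a2, l3/a3) \<noteq> (0, 0, 0)" using l(1) a1(1) a2(1) a3(1) by auto
      have e: "l1/a1 * a1 = l1" "l2/a2 * a2 = l2" "l3/a3 * a3 = l3" using a1(1) a2(1) a3(1) by auto
      show "rs (l1/a1) z1 + rs (l2/a2) z2 + rs (l3/a3) z3 = 0"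
        unfolding a1(2) a2(2) a3(2) O.dep_coords e using l(2,3) by blast
    qed
  qed
qed

end
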